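(* Let $D$ be an integral domain which is a P$\star$MD for some semistar operation $\star$ on $D$. Then: (a) every overring $T$ of $D$ is a P$\dot\star^T$MD; (b) every overring of $D$ that is $t$-linked to $(D,\star)$ is a P$v$MD; in particular $D^{[\star]}$ is a P$v$MD and, if moreover $(D:_KD^\star)\ne(0)$, the complete integral closure $\widetilde D$ of $D$ is a P$v$MD.
   Context: Let $D$ be an integral domain with quotient field $K$. $\overline{\mathbf F}(D)$ denotes the set of all nonzero $D$-submodules of $K$ and $\mathbf f(D)$ the set of nonzero finitely generated $D$-submodules of $K$. A semistar operation on $D$ is a map $\star:\overline{\mathbf F}(D)\to\overline{\mathbf F}(D)$, $E\mapsto E^\star$, such that for all $0\ne x\in K$ and $E,F\in\overline{\mathbf F}(D)$: (1) $(xE)^\star=xE^\star$; (2) $E\subseteq F\Rightarrow E^\star\subseteq F^\star$; (3) $E\subseteq E^\star$ and $(E^\star)^\star=E^\star$. $\star_f$ is defined by $E^{\star_f}=\bigcup\{F^\star:F\in\mathbf f(D),F\subseteq E\}$. An overring of $D$ is a ring $T$ with $D\subseteq T\subseteq K$; semistar operations on $T$ are defined analogously. For an overring $T$, $\dot\star^T$ is the semistar operation on $T$ given by $E\mapsto E^\star$; $v_T$ is $E\mapsto(T:_K(T:_KE))$ and $t_T:=(v_T)_f$. $T$ is $(\star,\star')$-linked to $D$ if for every nonzero finitely generated ideal $F\subseteq D$ with $F^\star=D^\star$ one has $(FT)^{\star'}=T^{\star'}$; $T$ is $t$-linked to $(D,\star)$ if it is $(\star,t_T)$-linked to $D$. For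 a semistar operation $\ast$ on a domain $R$ (here $R=D$ or an overring), $R$ is a P$\ast$MD if every nonzero finitely generated $R$-submodule $F$ of $K$ satisfies $(F(R:_KF))^{\ast_f}=R^\ast$; a P$v$MD is a P$v_R$MD. $D^{[\star]}:=\bigcup\{(H^\star:_KH^\star):H\in\mathbf f(D)\}$. The complete integral closure of $D$ is $\widetilde D=\bigcup\{(E:_KE): E$ a nonzero fractional ideal of $D\}$. *)

theory Defs
  imports Main
begin

text \<open>The quotient field K is modelled as the ambient type 'a::field; the domain D
and its overrings are subsets of it.\<close>

definition subring :: "'a::field set \<Rightarrow> bool" where
  "subring R \<longleftrightarrow> 0 \<in> R \<and> 1 \<in> R \<and> (\<forall>x\<in>R. \<forall>y\<in>R. x + y \<in> R \<and> - x \<in> R \<and> x * y \<in> R)"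

definition quotient_field_of :: "'a::field set \<Rightarrow> bool" where
  "quotient_field_of R \<longleftrightarrow> (\<forall>x::'a. \<exists>a\<in>R. \<exists>b\<in>R. b \<noteq> 0 \<and> x = a / b)"

definition overring :: "'a::field set \<Rightarrow> 'a set \<Rightarrow> bool" where
  "overring D T \<longleftrightarrow> subring T \<and> D \<subseteq> T"

definition submod :: "'a::field set \<Rightarrow> 'a set \<Rightarrow> bool" where
  "submod R E \<longleftrightarrow> 0 \<in> E \<and> (\<forall>x\<in>E. \<forall>y\<in>E. x + y \<in> E) \<and> (\<forall>r\<in>R. \<forall>x\<in>E. r * x \<in> E)"

definition Fbar :: "'a::field set \<Rightarrow> 'a set set" where
  "Fbar R = {E. submod R E \<and> E \<noteq> {0}}"

definition gen :: "'a::field set \<Rightarrow> 'a set \<Rightarrow> 'a set" where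
  "gen R S = {\<Sum>s\<in>S. c s * s | c. \<forall>s\<in>S. c s \<in> R}"

definition fgmod :: "'a::field set \<Rightarrow> 'a set set" where
  "fgmod R = {E. \<exists>S. finite S \<and> E = gen R S \<and> E \<noteq> {0}}"

definition smul :: "'a::field \<Rightarrow> 'a set \<Rightarrow> 'a set" where
  "smul x E = (\<lambda>e. x * e) ` E"

definition semistar :: "'a::field set \<Rightarrow> ('a set \<Rightarrow> 'a set) \<Rightarrow> bool" where
  "semistar R st \<longleftrightarrow>
     (\<forall>E\<in>Fbar R. st E \<in> Fbar R) \<and>
     (\<forall>x E. x \<noteq> 0 \<longrightarrow> E \<in> Fbar R \<longrightarrow> st (smul x E) = smul x (st E)) \<and>
     (\<forall>E G. E \<in> Fbar R \<longrightarrow> G \<in> Fbar R \<longrightarrow> E \<subseteq> G \<longrightarrow> st E \<subseteq> st G) \<and>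
     (\<forall>E\<in>Fbar R. E \<subseteq> st E \<and> st (st E) = st E)"

definition star_f :: "'a::field set \<Rightarrow> ('a set \<Rightarrow> 'a set) \<Rightarrow> 'a set \<Rightarrow> 'a set" where
  "star_f R st E = \<Union>{st G | G. G \<in> fgmod R \<and> G \<subseteq> E}"

definition kcolon :: "'a::field set \<Rightarrow> 'a set \<Rightarrow> 'a set" where
  "kcolon A B = {x. \<forall>b\<in>B. x * b \<in> A}"

definition modprod :: "'a::field set \<Rightarrow> 'a set \<Rightarrow> 'a set" where
  "modprod A B = {\<Sum>i<n. f i * g i | (n::nat) f g. \<forall>i<n. f i \<in> A \<and> g i \<in> B}"

definition PMD :: "'a::field set \<Rightarrow> ('a set \<Rightarrow> 'a set) \<Rightarrow> bool" where
  "PMD R st \<longleftrightarrow> (\<forall>X. X \<in> fgmod R \<longrightarrow> star_f R st (modprod X (kcolon R X)) = st R)"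

definition v_op :: "'a::field set \<Rightarrow> 'a set \<Rightarrow> 'a set" where
  "v_op R E = kcolon R (kcolon R E)"

definition t_op :: "'a::field set \<Rightarrow> 'a set \<Rightarrow> 'a set" where
  "t_op R = star_f R (v_op R)"

definition PvMD :: "'a::field set \<Rightarrow> bool" where
  "PvMD R \<longleftrightarrow> PMD R (v_op R)"

definition t_linked :: "'a::field set \<Rightarrow> ('a set \<Rightarrow> 'a set) \<Rightarrow> 'a set \<Rightarrow> bool" where
  "t_linked D st T \<longleftrightarrow>
     (\<forall>G. G \<in> fgmod D \<and> G \<subseteq> D \<and> st G = st D \<longrightarrow> t_op T (modprod G T) = t_op T T)"

definition star_bracket :: "'a::field set \<Rightarrow> ('a set \<Rightarrow> 'a set) \<Rightarrow> 'a set" where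
  "star_bracket D st = \<Union>{kcolon (st H) (st H) | H. H \<in> fgmod D}"

definition frac_ideal :: "'a::field set \<Rightarrow> 'a set \<Rightarrow> bool" where
  "frac_ideal D E \<longleftrightarrow> E \<in> Fbar D \<and> (\<exists>d\<in>D. d \<noteq> 0 \<and> smul d E \<subseteq> D)"

definition cic :: "'a::field set \<Rightarrow> 'a set" where
  "cic D = \<Union>{kcolon E E | E. frac_ideal D E}"

end

theory Submission
  imports Defs
begin


lemma sum_in:
  assumes "0 \<in> M" "\<And>x y. x \<in> M \<Longrightarrow> y \<in> M \<Longrightarrow> x + y \<in> M" "\<And>a. a \<in> A \<Longrightarrow> f a \<in> M"
  shows "sum f A \<in> M"
  using assms(3)
proof (induction A rule: infinite_finite_induct)
  case (infinite A) then show ?case using assms(1) by simp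
next
  case empty then show ?case using assms(1) by simp
next
  case (insert x F) then show ?case using assms(2) by simp
qed

lemma subringD:
  assumes "subring R"
  shows "0 \<in> R" "1 \<in> R" "x \<in> R \<Longrightarrow> y \<in> R \<Longrightarrow> x + y \<in> R"
    "x \<in> R \<Longrightarrow> - x \<in> R" "x \<in> R \<Longrightarrow> y \<in> R \<Longrightarrow> x * y \<in> R"
  using assms unfolding subring_def by auto

lemma submodD:
  assumes "submod R M"
  shows "0 \<in> M" "x \<in> M \<Longrightarrow> y \<in> M \<Longrightarrow> x + y \<in> M" "r \<in> R \<Longrightarrow> x \<in> M \<Longrightarrow> r * x \<in> M"
  using assms unfolding submod_def by auto

lemma submod_mono: "submod T M \<Longrightarrow> D \<subseteq> T \<Longrightarrow> submod D M"
  unfolding submod_def by blast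

lemma subring_submod: "subring R \<Longrightarrow> submod R R"
  unfolding submod_def subring_def by blast

lemma gen_mem: "x \<in> gen R S \<longleftrightarrow> (\<exists>c. x = (\<Sum>s\<in>S. c s * s) \<and> (\<forall>s\<in>S. c s \<in> R))"
  unfolding gen_def by blast

lemma gen_submod:
  assumes "subring R" shows "submod R (gen R S)"
proof -
  have "0 \<in> gen R S" unfolding gen_def
    by (rule CollectI, rule exI[of _ "\<lambda>_. 0"]) (simp add: subringD[OF assms])
  moreover have "x + y \<in> gen R S" if hx: "x \<in> gen R S" and hy: "y \<in> gen R S" for x y
  proof -
    obtain c where c: "x = (\<Sum>s\<in>S. c s * s)" "\<forall>s\<in>S. c s \<in> R" using hx unfolding gen_mem by blast
    obtain d where d: "y = (\<Sum>s\<in>S. d s * s)" "\<forall>s\<in>S. d s \<in> R" using hy unfolding gen_mem by blast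
    have "x + y = (\<Sum>s\<in>S. (c s + d s) * s)" by (simp add: c d distrib_right sum.distrib)
    then show ?thesis unfolding gen_def using c d subringD(3)[OF assms] by auto
  qed
  moreover have "r * x \<in> gen R S" if hr: "r \<in> R" and hx: "x \<in> gen R S" for r x
  proof -
    obtain c where c: "x = (\<Sum>s\<in>S. c s * s)" "\<forall>s\<in>S. c s \<in> R" using hx unfolding gen_mem by blast
    have "r * x = (\<Sum>s\<in>S. (r * c s) * s)" by (simp add: c sum_distrib_left mult.assoc)
    then show ?thesis unfolding gen_def using c hr subringD(5)[OF assms] by auto
  qed
  ultimately show ?thesis unfolding submod_def by blast
qed

lemma gen_sub:
  assumes "subring R" "finite S" shows "S \<subseteq> gen R S"
proof
  fix s assume s: "s \<in> S"
  have "(\<Sum>t\<in>S. (if t = s then 1 else 0) * t) = s"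
  proof -
    have "(\<Sum>t\<in>S. (if t = s then 1 else 0) * t) = (\<Sum>t\<in>S. if t = s then s else 0)"
      by (rule sum.cong) auto
    also have "\<dots> = s" using s assms(2) by simp
    finally show ?thesis .
  qed
  then show "s \<in> gen R S" unfolding gen_def using subringD(1,2)[OF assms(1)]
    by (auto intro!: exI[of _ "\<lambda>t. if t = s then 1 else 0"])
qed

lemma gen_least:
  assumes "submod R M" "S \<subseteq> M" shows "gen R S \<subseteq> M"
  unfolding gen_def using assms
  by (auto intro!: sum_in[of M] dest: submodD)

lemma gen_nz:
  assumes "gen R S \<noteq> {0}" "subring R" shows "\<exists>s\<in>S. s \<noteq> 0"
proof (rule ccontr)
  assume "\<not> ?thesis"
  then have "\<forall>x\<in>gen R S. x = 0" unfolding gen_def by (auto intro!: sum.neutral)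
  moreover have "0 \<in> gen R S" using gen_submod[OF assms(2)] by (rule submodD)
  ultimately show False using assms(1) by blast
qed

lemma gen_one: assumes "subring R" shows "gen R {1} = R"
  using assms unfolding gen_def by auto


lemma modprod_mem: "x \<in> modprod A B \<longleftrightarrow> (\<exists>(n::nat) f g. x = (\<Sum>i<n. f i * g i) \<and> (\<forall>i<n. f i \<in> A \<and> g i \<in> B))"
  unfolding modprod_def by auto

lemma modprod_mono: "A \<subseteq> A' \<Longrightarrow> B \<subseteq> B' \<Longrightarrow> modprod A B \<subseteq> modprod A' B'"
  unfolding modprod_def by blast

lemma modprod_sub:
  assumes "0 \<in> M" "\<And>x y. x \<in> M \<Longrightarrow> y \<in> M \<Longrightarrow> x + y \<in> M" "\<And>a b. a \<in> A \<Longrightarrow> b \<in> B \<Longrightarrow> a * b \<in> M"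
  shows "modprod A B \<subseteq> M"
  unfolding modprod_def using assms by (auto intro!: sum_in[of M])

lemma modprod_scal:
  assumes "\<And>a. a \<in> A \<Longrightarrow> x * a \<in> A'" "p \<in> modprod A B"
  shows "x * p \<in> modprod A' B"
proof -
  obtain n :: nat and f g where p: "p = (\<Sum>i<n. f i * g i)" "\<forall>i<n. f i \<in> A \<and> g i \<in> B"
    using assms(2) unfolding modprod_mem by blast
  have "x * p = (\<Sum>i<n. (x * f i) * g i)" by (simp add: p sum_distrib_left mult.assoc)
  moreover have "\<forall>i<n. x * f i \<in> A' \<and> g i \<in> B" using p assms(1) by blast
  ultimately show ?thesis unfolding modprod_mem
    by (intro exI[of _ n] exI[of _ "\<lambda>i. x * f i"] exI[of _ g]) simp
qed

lemma modprod_comm1: "x \<in> modprod A B \<Longrightarrow> x \<in> modprod B A"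
proof -
  assume "x \<in> modprod A B"
  then obtain n :: nat and f g where p: "x = (\<Sum>i<n. f i * g i)" "\<forall>i<n. f i \<in> A \<and> g i \<in> B"
    unfolding modprod_mem by blast
  have "x = (\<Sum>i<n. g i * f i)" by (simp add: p mult.commute)
  then show ?thesis unfolding modprod_mem using p by blast
qed

lemma modprod_comm: "modprod A B = modprod B A"
  using modprod_comm1 by blast

lemma modprod_single: "a \<in> A \<Longrightarrow> b \<in> B \<Longrightarrow> a * b \<in> modprod A B"
  unfolding modprod_mem by (rule exI[of _ 1]) auto

lemma modprod_zero: "0 \<in> modprod A B"
  unfolding modprod_mem by (rule exI[of _ 0]) auto

lemma modprod_add:
  assumes "p \<in> modprod A B" "q \<in> modprod A B" shows "p + q \<in> modprod A B"
proof -
  obtain n :: nat and f g where p: "p = (\<Sum>i<n. f i * g i)" "\<forall>i<n. f i \<in> A \<and> g i \<in> B"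
    using assms(1) unfolding modprod_mem by blast
  obtain m :: nat and f' g' where q: "q = (\<Sum>i<m. f' i * g' i)" "\<forall>i<m. f' i \<in> A \<and> g' i \<in> B"
    using assms(2) unfolding modprod_mem by blast
  define F where "F i = (if i < n then f i else f' (i - n))" for i
  define G where "G i = (if i < n then g i else g' (i - n))" for i
  have "(\<Sum>i<n+k. F i * G i) = (\<Sum>i<n. f i * g i) + (\<Sum>i<k. f' i * g' i)" for k
  proof (induction k)
    case 0 show ?case by (simp add: F_def G_def)
  next
    case (Suc k) then show ?case by (simp add: F_def G_def)
  qed
  then have "p + q = (\<Sum>i<n+m. F i * G i)" using p q by simp
  moreover have "\<forall>i<n+m. F i \<in> A \<and> G i \<in> B" using p q by (auto simp: F_def G_def)
  ultimately show ?thesis unfolding modprod_mem by blast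
qed

lemma modprod_submod:
  assumes "submod R A" shows "submod R (modprod A B)"
  unfolding submod_def using modprod_zero modprod_add
  by (auto intro!: modprod_scal[of A _ A] dest: submodD(3)[OF assms])

lemma kc_anti: "A \<subseteq> B \<Longrightarrow> kcolon M B \<subseteq> kcolon M A"
  unfolding kcolon_def by blast

lemma kc_ring:
  assumes "subring D" "submod D E"
  shows "subring (kcolon E E)" "D \<subseteq> kcolon E E"
proof -
  note s = submodD[OF assms(2)] and r = subringD[OF assms(1)]
  have neg: "- x \<in> E" if "x \<in> E" for x
    using s(3)[OF r(4)[OF r(2)] that] by simp
  show "subring (kcolon E E)" unfolding subring_def kcolon_def
    by (auto simp: s distrib_right mult.assoc neg)
  show "D \<subseteq> kcolon E E" unfolding kcolon_def using s(3) by auto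
qed

lemma kc_ringT: assumes "subring T" shows "kcolon T T = T"
proof
  show "kcolon T T \<subseteq> T"
  proof
    fix x assume "x \<in> kcolon T T"
    then have "x * 1 \<in> T" using subringD(2)[OF assms] unfolding kcolon_def by blast
    then show "x \<in> T" by simp
  qed

  show "T \<subseteq> kcolon T T" unfolding kcolon_def using subringD(5)[OF assms] by auto
qed


lemma Fbar_iff: "E \<in> Fbar D \<longleftrightarrow> submod D E \<and> E \<noteq> {0}"
  unfolding Fbar_def by blast

lemma nz_ex: "submod D E \<Longrightarrow> E \<noteq> {0} \<Longrightarrow> \<exists>e\<in>E. e \<noteq> 0"
  using submodD(1) by blast

lemma Fbar_nz: "E \<in> Fbar D \<Longrightarrow> \<exists>e\<in>E. e \<noteq> 0"
  unfolding Fbar_iff using nz_ex by blast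

lemma nz_Fbar: "submod D E \<Longrightarrow> e \<in> E \<Longrightarrow> e \<noteq> 0 \<Longrightarrow> E \<in> Fbar D"
  unfolding Fbar_iff by blast

context
  fixes D :: "'a::field set" and st :: "'a set \<Rightarrow> 'a set"
  assumes ss: "semistar D st" and sr: "subring D"
begin

lemma ss_Fbar: "E \<in> Fbar D \<Longrightarrow> st E \<in> Fbar D"
  using conjunct1[OF ss[unfolded semistar_def]] by blast
lemma ss_smul: "x \<noteq> 0 \<Longrightarrow> E \<in> Fbar D \<Longrightarrow> st (smul x E) = smul x (st E)"
  using conjunct1[OF conjunct2[OF ss[unfolded semistar_def]]] by blast
lemma ss_mono: "E \<in> Fbar D \<Longrightarrow> G \<in> Fbar D \<Longrightarrow> E \<subseteq> G \<Longrightarrow> st E \<subseteq> st G"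
  using conjunct1[OF conjunct2[OF conjunct2[OF ss[unfolded semistar_def]]]] by blast
lemma ss_ext: "E \<in> Fbar D \<Longrightarrow> E \<subseteq> st E"
  using conjunct2[OF conjunct2[OF conjunct2[OF ss[unfolded semistar_def]]]] by blast
lemma ss_idem: "E \<in> Fbar D \<Longrightarrow> st (st E) = st E"
  using conjunct2[OF conjunct2[OF conjunct2[OF ss[unfolded semistar_def]]]] by blast
lemma ss_submod: "E \<in> Fbar D \<Longrightarrow> submod D (st E)"
  using ss_Fbar Fbar_iff by blast

lemma smul_Fbar:
  assumes "E \<in> Fbar D" "x \<noteq> 0" shows "smul x E \<in> Fbar D"
proof -
  have sm: "submod D E" using assms(1) Fbar_iff by blast
  have "submod D (smul x E)" unfolding submod_def smul_def
  proof (intro conjI ballI)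
    show "0 \<in> (*) x ` E" using submodD(1)[OF sm] by force
  next
    fix a b assume "a \<in> (*) x ` E" "b \<in> (*) x ` E"
    then obtain a' b' where "a' \<in> E" "b' \<in> E" "a = x * a'" "b = x * b'" by blast
    then show "a + b \<in> (*) x ` E" using submodD(2)[OF sm, of a' b']
      by (metis distrib_left image_eqI)
  next
    fix r a assume "r \<in> D" "a \<in> (*) x ` E"
    then obtain a' where "a' \<in> E" "a = x * a'" by blast
    then show "r * a \<in> (*) x ` E" using submodD(3)[OF sm, of r a'] \<open>r \<in> D\<close>
      by (metis mult.left_commute image_eqI)
  qed
  moreover obtain e where "e \<in> E" "e \<noteq> 0" using Fbar_nz[OF assms(1)] by blast
  ultimately show ?thesis using assms(2) by (intro nz_Fbar[of _ _ "x * e"]) (auto simp: smul_def)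
qed

lemma D_Fbar: "D \<in> Fbar D"
  using subring_submod[OF sr] subringD(2)[OF sr] by (intro nz_Fbar[of _ _ 1]) auto

lemma one_st: "1 \<in> st D"
  using ss_ext[OF D_Fbar] subringD(2)[OF sr] by blast

lemma one_imp:
  assumes "E \<in> Fbar D" "1 \<in> st E" shows "D \<subseteq> st E" "st D \<subseteq> st E"
proof -
  show D: "D \<subseteq> st E" using submodD(3)[OF ss_submod[OF assms(1)] _ assms(2)] by force
  show "st D \<subseteq> st E" using ss_mono[OF D_Fbar ss_Fbar[OF assms(1)] D] ss_idem[OF assms(1)] by simp
qed

lemma smul_mem: "z \<in> E \<Longrightarrow> x * z \<in> smul x E"
  unfolding smul_def by blast

lemma modprod_Fbar:
  assumes "G \<in> Fbar D" "A \<in> Fbar D" shows "modprod G A \<in> Fbar D"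
proof -
  obtain g where "g \<in> G" "g \<noteq> 0" using Fbar_nz[OF assms(1)] by blast
  moreover obtain a where "a \<in> A" "a \<noteq> 0" using Fbar_nz[OF assms(2)] by blast
  ultimately show ?thesis using modprod_submod[of D G A] assms(1) Fbar_iff
    by (intro nz_Fbar[of _ _ "g * a"]) (auto intro: modprod_single)
qed

lemma GE:
  assumes G: "G \<in> Fbar D" "G \<subseteq> D" "st G = st D" and A: "A \<in> Fbar D"
  shows "st (modprod G A) = st A"
proof
  have smA: "submod D A" using A Fbar_iff by blast
  have sub: "modprod G A \<subseteq> A"
    by (rule modprod_sub) (use submodD[OF smA] G(2) in auto)
  show "st (modprod G A) \<subseteq> st A" by (rule ss_mono[OF modprod_Fbar[OF G(1) A] A sub])
  have "A \<subseteq> st (modprod G A)"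
  proof
    fix a assume a: "a \<in> A"
    show "a \<in> st (modprod G A)"
    proof (cases "a = 0")
      case True then show ?thesis using submodD(1)[OF ss_submod[OF modprod_Fbar[OF G(1) A]]] by simp
    next
      case False
      have "a * 1 \<in> smul a (st G)" using one_st G(3) by (intro smul_mem) simp
      also have "smul a (st G) = st (smul a G)" using ss_smul[OF False G(1)] by simp
      also have "\<dots> \<subseteq> st (modprod G A)"
        apply (rule ss_mono[OF smul_Fbar[OF G(1) False] modprod_Fbar[OF G(1) A]])
        using a by (auto simp: smul_def mult.commute intro: modprod_single)
      finally show ?thesis by simp
    qed
  qed
  then show "st A \<subseteq> st (modprod G A)"
    using ss_mono[OF A ss_Fbar[OF modprod_Fbar[OF G(1) A]]] ss_idem[OF modprod_Fbar[OF G(1) A]] by simp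
qed

lemma core:
  assumes G: "G \<in> Fbar D" "G \<subseteq> D" "st G = st D" and E: "E \<in> Fbar D"
    and y: "\<forall>g\<in>G. y * g \<in> kcolon (st E) (st E)"
  shows "y \<in> kcolon (st E) (st E)"
proof (cases "y = 0")
  case True then show ?thesis unfolding kcolon_def using submodD(1)[OF ss_submod[OF E]] by simp
next
  case False
  define A where "A = st E"
  have A: "A \<in> Fbar D" using ss_Fbar[OF E] A_def by simp
  have smA: "submod D A" using A Fbar_iff by blast
  have "y * z \<in> A" if z: "z \<in> A" for z
  proof -
    have "z \<in> st (modprod G A)" using GE[OF G A] z ss_idem[OF E] A_def by simp
    then have "y * z \<in> smul y (st (modprod G A))" by (rule smul_mem)
    also have "\<dots> = st (smul y (modprod G A))" using ss_smul[OF False modprod_Fbar[OF G(1) A]] by simp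
    also have "\<dots> \<subseteq> st A"
    proof (rule ss_mono[OF smul_Fbar[OF modprod_Fbar[OF G(1) A] False] A])
      have "modprod (kcolon A A) A \<subseteq> A"
        by (rule modprod_sub) (use submodD[OF smA] in \<open>auto simp: kcolon_def\<close>)
      moreover have "y * p \<in> modprod (kcolon A A) A" if "p \<in> modprod G A" for p
        by (rule modprod_scal[OF _ that]) (use y A_def in auto)
      ultimately show "smul y (modprod G A) \<subseteq> A" unfolding smul_def by blast
    qed
    also have "\<dots> = A" using ss_idem[OF E] A_def by simp
    finally show ?thesis .
  qed
  then show ?thesis unfolding kcolon_def A_def by blast
qed

lemma kc_star:
  assumes E: "E \<in> Fbar D" and x: "x \<in> kcolon E E"
  shows "x \<in> kcolon (st E) (st E)"
proof (cases "x = 0")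
  case True then show ?thesis unfolding kcolon_def using submodD(1)[OF ss_submod[OF E]] by simp
next
  case False
  have "x * z \<in> st E" if "z \<in> st E" for z
  proof -
    have "x * z \<in> smul x (st E)" using that by (rule smul_mem)
    also have "\<dots> = st (smul x E)" using ss_smul[OF False E] by simp
    also have "\<dots> \<subseteq> st E"
      by (rule ss_mono[OF smul_Fbar[OF E False] E]) (use x in \<open>auto simp: smul_def kcolon_def\<close>)
    finally show ?thesis .
  qed
  then show ?thesis unfolding kcolon_def by blast
qed

end

lemma submod_mulset: "submod D M \<Longrightarrow> submod D {z. x * z \<in> M}"
  unfolding submod_def by (auto simp: distrib_left mult.left_commute)

lemma ring_submod: "subring C \<Longrightarrow> D \<subseteq> C \<Longrightarrow> submod D C"
  using subring_submod submod_mono by blast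

lemma fgmodE:
  assumes "X \<in> fgmod R" obtains S where "finite S" "X = gen R S" "X \<noteq> {0}"
  using assms unfolding fgmod_def by blast

lemma fgmod_I: "finite S \<Longrightarrow> subring R \<Longrightarrow> s \<in> S \<Longrightarrow> s \<noteq> 0 \<Longrightarrow> gen R S \<in> fgmod R"
  unfolding fgmod_def using gen_sub[of R S] by blast

lemma fgmod_Fbar:
  assumes "subring T" "D \<subseteq> T" "X \<in> fgmod T" shows "X \<in> Fbar D" "submod T X"
proof -
  obtain S where "finite S" "X = gen T S" "X \<noteq> {0}" using fgmodE[OF assms(3)] by blast
  then show "submod T X" "X \<in> Fbar D" using gen_submod[OF assms(1)] submod_mono[OF _ assms(2)]
    unfolding Fbar_iff by auto
qed

lemma t_sub:
  assumes "subring T" "E \<subseteq> T" shows "t_op T E \<subseteq> T"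
proof -
  have "v_op T G \<subseteq> T" if "G \<subseteq> T" for G
  proof -
    have "v_op T G \<subseteq> v_op T T" unfolding v_op_def by (intro kc_anti that)
    then show ?thesis unfolding v_op_def kc_ringT[OF assms(1)] .
  qed
  then show ?thesis unfolding t_op_def star_f_def using assms(2) by blast
qed

lemma t_mono: "E \<subseteq> E' \<Longrightarrow> t_op T E \<subseteq> t_op T E'"
  unfolding t_op_def star_f_def by blast

lemma t_full:
  assumes "subring T" "E \<subseteq> T" "H \<in> fgmod T" "H \<subseteq> E" "kcolon T H \<subseteq> T"
  shows "t_op T E = T"
proof
  show "t_op T E \<subseteq> T" by (rule t_sub[OF assms(1,2)])
  have "T \<subseteq> v_op T H" unfolding v_op_def kcolon_def
    using assms(5) subringD(5)[OF assms(1)] unfolding kcolon_def by blast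
  then show "T \<subseteq> t_op T E" unfolding t_op_def star_f_def using assms(3,4) by blast
qed

lemma t_TT: assumes "subring T" shows "t_op T T = T"
proof (rule t_full[OF assms order.refl])
  show "gen T {1} \<in> fgmod T" by (rule fgmod_I) (use assms in auto)
  show "gen T {1} \<subseteq> T" "kcolon T (gen T {1}) \<subseteq> T" unfolding gen_one[OF assms] kc_ringT[OF assms] by auto
qed

lemma kc_gen:
  assumes "subring D" "subring T" "D \<subseteq> T" "g \<in> kcolon D (gen D S)" "finite S"
  shows "g \<in> kcolon T (gen T S)"
proof -
  have "S \<subseteq> gen D S" by (rule gen_sub[OF assms(1,5)])
  then have "S \<subseteq> {z. g * z \<in> T}" using assms(3,4) unfolding kcolon_def by (auto simp: mult.commute)
  then have "gen T S \<subseteq> {z. g * z \<in> T}"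
    by (intro gen_least submod_mulset subring_submod assms(2))
  then show ?thesis unfolding kcolon_def by (auto simp: mult.commute)
qed

lemma P_sub:
  assumes "subring T" shows "modprod X (kcolon T X) \<subseteq> T"
  by (rule modprod_sub) (use subringD[OF assms] in \<open>auto simp: kcolon_def mult.commute\<close>)

lemma common:
  assumes sr: "subring D" and ss: "semistar D st" and pm: "PMD D st"
    and T: "subring T" "D \<subseteq> T" and X: "X \<in> fgmod T"
  obtains G S' where "G \<in> fgmod D" "G = gen D S'" "finite S'" "G \<subseteq> modprod X (kcolon T X)" "G \<subseteq> D" "st G = st D"
proof -
  obtain S where S: "finite S" "X = gen T S" "X \<noteq> {0}" using fgmodE[OF X] by blast
  obtain s where s: "s \<in> S" "s \<noteq> 0" using gen_nz[OF _ T(1)] S by blast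
  define F where "F = gen D S"
  have FX: "F \<subseteq> X" unfolding F_def
    by (rule gen_least) (use S gen_submod[OF T(1)] submod_mono[OF _ T(2)] gen_sub[OF T(1) S(1)] in auto)
  have F: "F \<in> fgmod D" unfolding F_def by (rule fgmod_I[OF S(1) sr s])
  have kk: "kcolon D F \<subseteq> kcolon T X" unfolding F_def S(2)
    using kc_gen[OF sr T _ S(1)] by blast
  have "1 \<in> star_f D st (modprod F (kcolon D F))" using pm F one_st[OF ss sr] unfolding PMD_def by simp
  then obtain G where G: "G \<in> fgmod D" "G \<subseteq> modprod F (kcolon D F)" "1 \<in> st G"
    unfolding star_f_def by blast
  obtain S' where S': "finite S'" "G = gen D S'" using fgmodE[OF G(1)] by blast
  have GP: "G \<subseteq> modprod X (kcolon T X)" using G(2) modprod_mono[OF FX kk] by blast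
  have GD: "G \<subseteq> D" using G(2) P_sub[OF sr] by blast
  have GF: "G \<in> Fbar D" using fgmod_Fbar[OF sr order.refl G(1)] by blast
  have "st G = st D"
    using one_imp[OF ss sr GF G(3)] ss_mono[OF ss sr GF D_Fbar[OF ss sr] GD] by blast
  then show ?thesis using that G(1) S' GP GD by blast
qed

lemma partA:
  assumes sr: "subring D" and ss: "semistar D st" and pm: "PMD D st"
    and T: "overring D T"
  shows "PMD T st"
  unfolding PMD_def
proof (intro allI impI)
  fix X assume X: "X \<in> fgmod T"
  have Ts: "subring T" "D \<subseteq> T" using T unfolding overring_def by auto
  define P where "P = modprod X (kcolon T X)"
  have PT: "P \<subseteq> T" unfolding P_def by (rule P_sub[OF Ts(1)])
  have TF: "T \<in> Fbar D"
    using ring_submod[OF Ts] subringD(2)[OF Ts(1)] by (intro nz_Fbar[of _ _ 1]) auto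
  have Psm: "submod T P" unfolding P_def by (rule modprod_submod) (use fgmod_Fbar[OF Ts X] in auto)
  obtain G S' where G: "G \<in> fgmod D" "G = gen D S'" "finite S'" "G \<subseteq> P" "G \<subseteq> D" "st G = st D"
    using common[OF sr ss pm Ts X] unfolding P_def by blast
  define G' where "G' = gen T S'"
  have GG': "G \<subseteq> G'" unfolding G(2) G'_def
    by (rule gen_least) (use gen_submod[OF Ts(1)] submod_mono[OF _ Ts(2)] gen_sub[OF Ts(1) G(3)] in auto)
  have S'G: "S' \<subseteq> G" using gen_sub[OF sr G(3)] G(2) by simp
  have G'P: "G' \<subseteq> P" unfolding G'_def using gen_least[OF Psm] S'G G(4) by blast
  obtain g where g: "g \<in> G" "g \<noteq> 0" using fgmodE[OF G(1)] Fbar_nz fgmod_Fbar[OF sr order.refl G(1)] by blast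
  have G'fg: "G' \<in> fgmod T"
  proof -
    obtain s where "s \<in> S'" "s \<noteq> 0" using gen_nz[OF _ sr] G(2) g by blast
    then show ?thesis unfolding G'_def by (rule fgmod_I[OF G(3) Ts(1)])
  qed
  have G'F: "G' \<in> Fbar D" and G'sm: "submod T G'" using fgmod_Fbar[OF Ts G'fg] by auto
  have GF: "G \<in> Fbar D" using fgmod_Fbar[OF sr order.refl G(1)] by blast
  have one: "1 \<in> st G'" using ss_mono[OF ss sr GF G'F GG'] G(6) one_st[OF ss sr] by blast
  have "T \<subseteq> st G'"
  proof
    fix t assume t: "t \<in> T"
    show "t \<in> st G'"
    proof (cases "t = 0")
      case True then show ?thesis using submodD(1)[OF ss_submod[OF ss sr G'F]] by simp
    next
      case False
      have "t * 1 \<in> smul t (st G')" using one unfolding smul_def by blast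
      also have "\<dots> = st (smul t G')" using ss_smul[OF ss sr False G'F] by simp
      also have "\<dots> \<subseteq> st G'"
        by (rule ss_mono[OF ss sr smul_Fbar[OF ss sr G'F False] G'F]) (use submodD(3)[OF G'sm t] in \<open>auto simp: smul_def\<close>)
      finally show ?thesis by simp
    qed
  qed
  then have "st T \<subseteq> st G'" using ss_mono[OF ss sr TF ss_Fbar[OF ss sr G'F]] ss_idem[OF ss sr G'F] by simp
  then have "st T \<subseteq> star_f T st P" unfolding star_f_def using G'fg G'P by blast
  moreover have "star_f T st P \<subseteq> st T"
    unfolding star_f_def using fgmod_Fbar[OF Ts] PT ss_mono[OF ss sr _ TF] by blast
  ultimately show "star_f T st (modprod X (kcolon T X)) = st T" unfolding P_def by blast
qed

lemma partB:
  assumes sr: "subring D" and ss: "semistar D st" and pm: "PMD D st"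
    and T: "overring D T" and tl: "t_linked D st T"
  shows "PvMD T"
  unfolding PvMD_def PMD_def
proof (intro allI impI)
  fix X assume X: "X \<in> fgmod T"
  have Ts: "subring T" "D \<subseteq> T" using T unfolding overring_def by auto
  define P where "P = modprod X (kcolon T X)"
  have PT: "P \<subseteq> T" unfolding P_def by (rule P_sub[OF Ts(1)])
  have Psm: "submod T P" unfolding P_def by (rule modprod_submod) (use fgmod_Fbar[OF Ts X] in auto)
  obtain G S' where G: "G \<in> fgmod D" "G = gen D S'" "finite S'" "G \<subseteq> P" "G \<subseteq> D" "st G = st D"
    using common[OF sr ss pm Ts X] unfolding P_def by blast
  have e: "t_op T (modprod G T) = T" using tl G t_TT[OF Ts(1)] unfolding t_linked_def by auto
  have "modprod G T \<subseteq> P"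
  proof (rule modprod_sub)
    show "0 \<in> P" by (rule submodD(1)[OF Psm])
    show "x + y \<in> P" if "x \<in> P" "y \<in> P" for x y using submodD(2)[OF Psm] that by blast
    show "a * b \<in> P" if ha: "a \<in> G" and hb: "b \<in> T" for a b
    proof -
      have "b * a \<in> P" using submodD(3)[OF Psm hb] ha G(4) by blast
      then show ?thesis by (simp add: mult.commute)
    qed
  qed
  then have "T \<subseteq> t_op T P" using t_mono e by blast
  then have "t_op T P = T" using t_sub[OF Ts(1) PT] by blast
  then show "star_f T (v_op T) (modprod X (kcolon T X)) = v_op T T"
    unfolding P_def t_op_def v_op_def kc_ringT[OF Ts(1)] .
qed

lemma TL:
  assumes sr: "subring D" and T: "subring T" "D \<subseteq> T"
    and crit: "\<And>G S y. G \<in> fgmod D \<Longrightarrow> G = gen D S \<Longrightarrow> finite S \<Longrightarrow> G \<subseteq> D \<Longrightarrow> st G = st D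
       \<Longrightarrow> (\<forall>s\<in>S. y * s \<in> T) \<Longrightarrow> y \<in> T"
  shows "t_linked D st T"
  unfolding t_linked_def
proof (intro allI impI)
  fix G assume G: "G \<in> fgmod D \<and> G \<subseteq> D \<and> st G = st D"
  have Gfg: "G \<in> fgmod D" using G by blast
  obtain S where S: "finite S" "G = gen D S" "G \<noteq> {0}" by (rule fgmodE[OF Gfg])
  have "gen D S \<noteq> {0}" using S(2,3) by simp
  then obtain s where s: "s \<in> S" "s \<noteq> 0" using gen_nz[OF _ sr] by blast
  define H where "H = gen T S"
  have Hfg: "H \<in> fgmod T" unfolding H_def by (rule fgmod_I[OF S(1) T(1) s])
  have GTsm: "submod T (modprod G T)"
    by (subst modprod_comm) (rule modprod_submod[OF subring_submod[OF T(1)]])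
  have SG: "S \<subseteq> modprod G T"
  proof
    fix s assume "s \<in> S"
    then have "s \<in> G" using gen_sub[OF sr S(1)] S(2) by blast
    then have "s * 1 \<in> modprod G T" using subringD(2)[OF T(1)] by (rule modprod_single)
    then show "s \<in> modprod G T" by simp
  qed
  have HGT: "H \<subseteq> modprod G T" unfolding H_def by (rule gen_least[OF GTsm SG])
  have GD: "G \<subseteq> D" using G by blast
  have GTT: "modprod G T \<subseteq> T"
  proof (rule modprod_sub)
    show "0 \<in> T" by (rule subringD(1)[OF T(1)])
    show "x + y \<in> T" if "x \<in> T" "y \<in> T" for x y using subringD(3)[OF T(1)] that by blast
    show "a * b \<in> T" if ha: "a \<in> G" and hb: "b \<in> T" for a b
      using subringD(5)[OF T(1) _ hb] ha GD T(2) by blast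
  qed
  have "kcolon T H \<subseteq> T"
  proof
    fix y assume "y \<in> kcolon T H"
    then have "\<forall>s\<in>S. y * s \<in> T" using gen_sub[OF T(1) S(1)] unfolding H_def kcolon_def by blast
    then show "y \<in> T" using crit[OF Gfg S(2,1)] G by blast
  qed
  then show "t_op T (modprod G T) = t_op T T"
    using t_full[OF T(1) GTT Hfg HGT] t_TT[OF T(1)] by simp
qed

lemma dir_fin:
  assumes "F \<noteq> {}" "\<forall>A\<in>F. \<forall>B\<in>F. \<exists>C\<in>F. A \<subseteq> C \<and> B \<subseteq> C" "finite S"
  shows "(\<forall>s\<in>S. z s \<in> \<Union>F) \<Longrightarrow> \<exists>C\<in>F. \<forall>s\<in>S. z s \<in> C"
  using assms(3)
proof (induction S rule: finite_induct)
  case empty then show ?case using assms(1) by blast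
next
  case (insert x S)
  then obtain C where C: "C \<in> F" "\<forall>s\<in>S. z s \<in> C" by blast
  obtain A where A: "A \<in> F" "z x \<in> A" using insert.prems by blast
  obtain C' where "C' \<in> F" "A \<subseteq> C'" "C \<subseteq> C'" using assms(2) A(1) C(1) by blast
  then show ?case using A C by blast
qed

lemma dir_ring:
  assumes "F \<noteq> {}" "\<forall>A\<in>F. \<forall>B\<in>F. \<exists>C\<in>F. A \<subseteq> C \<and> B \<subseteq> C" "\<forall>A\<in>F. subring A"
  shows "subring (\<Union>F)"
proof -
  obtain A0 where "A0 \<in> F" using assms(1) by blast
  then have "0 \<in> \<Union>F" "1 \<in> \<Union>F" using assms(3) subringD by blast+
  moreover have "x + y \<in> \<Union>F \<and> - x \<in> \<Union>F \<and> x * y \<in> \<Union>F" if hx: "x \<in> \<Union>F" and hy: "y \<in> \<Union>F" for x y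
  proof -
    obtain A B where "A \<in> F" "B \<in> F" "x \<in> A" "y \<in> B" using hx hy by blast
    then obtain C where "C \<in> F" "x \<in> C" "y \<in> C" using assms(2) by blast
    then show ?thesis using assms(3) subringD[of C] by blast
  qed
  ultimately show ?thesis unfolding subring_def by blast
qed


lemma SB_half:
  assumes sr: "subring D" and ss: "semistar D st"
    and S: "finite S1" "finite S2" "finite Q" and H1: "gen D S1 \<in> fgmod D" and H: "gen D Q \<in> fgmod D"
    and Q1: "\<forall>a\<in>S1. \<forall>b\<in>S2. a * b \<in> Q" and Q2: "Q \<subseteq> {a * b | a b. a \<in> S1 \<and> b \<in> S2}"
  shows "kcolon (st (gen D S1)) (st (gen D S1)) \<subseteq> kcolon (st (gen D Q)) (st (gen D Q))"
proof
  fix x assume x: "x \<in> kcolon (st (gen D S1)) (st (gen D S1))"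
  define H1' where "H1' = gen D S1"
  define H' where "H' = gen D Q"
  have H1F: "H1' \<in> Fbar D" using fgmod_Fbar[OF sr order.refl H1] H1'_def by simp
  have HF: "H' \<in> Fbar D" using fgmod_Fbar[OF sr order.refl H] H'_def by simp
  have Hsm: "submod D H'" and stHsm: "submod D (st H')" using HF ss_submod[OF ss sr HF] Fbar_iff by auto
  have x': "x * w \<in> st H1'" if "w \<in> st H1'" for w using x that unfolding H1'_def kcolon_def by blast
  show "x \<in> kcolon (st (gen D Q)) (st (gen D Q))"
  proof (cases "x = 0")
    case True then show ?thesis unfolding kcolon_def using submodD(1)[OF stHsm] H'_def by simp
  next
    case False
    have step1: "smul b H1' \<subseteq> H'" if b: "b \<in> S2" for b
    proof -
      have "S1 \<subseteq> {z. b * z \<in> H'}"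
      proof
        fix a assume a: "a \<in> S1"
        have "a * b \<in> H'" using Q1 a b gen_sub[OF sr S(3)] H'_def by blast
        then show "a \<in> {z. b * z \<in> H'}" by (simp add: mult.commute)
      qed
      then have "gen D S1 \<subseteq> {z. b * z \<in> H'}" by (intro gen_least submod_mulset Hsm)
      then show ?thesis unfolding smul_def H1'_def by blast
    qed
    have step2: "w * b \<in> st H'" if w: "w \<in> st H1'" and b: "b \<in> S2" for w b
    proof (cases "b = 0")
      case True then show ?thesis using submodD(1)[OF stHsm] by simp
    next
      case bnz: False
      have "b * w \<in> smul b (st H1')" using w unfolding smul_def by blast
      also have "\<dots> = st (smul b H1')" using ss_smul[OF ss sr bnz H1F] by simp
      also have "\<dots> \<subseteq> st H'" by (rule ss_mono[OF ss sr smul_Fbar[OF ss sr H1F bnz] HF step1[OF b]])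
      finally show ?thesis by (simp add: mult.commute)
    qed
    have step3: "smul x H' \<subseteq> st H'"
    proof -
      have "Q \<subseteq> {z. x * z \<in> st H'}"
      proof
        fix q assume "q \<in> Q"
        then obtain a b where ab: "q = a * b" "a \<in> S1" "b \<in> S2" using Q2 by blast
        have "a \<in> st H1'" using gen_sub[OF sr S(1)] ss_ext[OF ss sr H1F] ab(2) H1'_def by blast
        then have "(x * a) * b \<in> st H'" using step2 x' ab(3) by blast
        then show "q \<in> {z. x * z \<in> st H'}" using ab(1) by (simp add: mult.assoc)
      qed
      then have "gen D Q \<subseteq> {z. x * z \<in> st H'}" by (intro gen_least submod_mulset stHsm)
      then show ?thesis unfolding smul_def H'_def by blast
    qed
    have "x * z \<in> st H'" if z: "z \<in> st H'" for z
    proof -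
      have "x * z \<in> smul x (st H')" using z unfolding smul_def by blast
      also have "\<dots> = st (smul x H')" using ss_smul[OF ss sr False HF] by simp
      also have "\<dots> \<subseteq> st (st H')" by (rule ss_mono[OF ss sr smul_Fbar[OF ss sr HF False] ss_Fbar[OF ss sr HF] step3])
      also have "\<dots> = st H'" by (rule ss_idem[OF ss sr HF])
      finally show ?thesis .
    qed
    then show ?thesis unfolding kcolon_def H'_def by blast
  qed
qed

lemma SB_dir:
  assumes sr: "subring D" and ss: "semistar D st" and H1: "H1 \<in> fgmod D" and H2: "H2 \<in> fgmod D"
  shows "\<exists>H\<in>fgmod D. kcolon (st H1) (st H1) \<subseteq> kcolon (st H) (st H) \<and> kcolon (st H2) (st H2) \<subseteq> kcolon (st H) (st H)"
proof -
  obtain S1 where S1: "finite S1" "H1 = gen D S1" "H1 \<noteq> {0}" by (rule fgmodE[OF H1])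
  obtain S2 where S2: "finite S2" "H2 = gen D S2" "H2 \<noteq> {0}" by (rule fgmodE[OF H2])
  have "gen D S1 \<noteq> {0}" using S1 by simp
  then obtain a where a: "a \<in> S1" "a \<noteq> 0" using gen_nz[OF _ sr] by blast
  have "gen D S2 \<noteq> {0}" using S2 by simp
  then obtain b where b: "b \<in> S2" "b \<noteq> 0" using gen_nz[OF _ sr] by blast
  define P where "P = (\<lambda>(a, b). a * b) ` (S1 \<times> S2)"
  have Pf: "finite P" unfolding P_def using S1(1) S2(1) by simp
  have P1: "\<forall>a\<in>S1. \<forall>b\<in>S2. a * b \<in> P" unfolding P_def by force
  have P2: "P \<subseteq> {a * b | a b. a \<in> S1 \<and> b \<in> S2}" unfolding P_def by force
  have P1': "\<forall>a\<in>S2. \<forall>b\<in>S1. a * b \<in> P"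
  proof (intro ballI)
    fix a b assume "a \<in> S2" "b \<in> S1"
    then have "b * a \<in> P" using P1 by blast
    then show "a * b \<in> P" by (simp add: mult.commute)
  qed
  have P2': "P \<subseteq> {a * b | a b. a \<in> S2 \<and> b \<in> S1}"
  proof
    fix q assume "q \<in> P"
    then obtain a b where "q = a * b" "a \<in> S1" "b \<in> S2" using P2 by blast
    then have "q = b * a \<and> b \<in> S2 \<and> a \<in> S1" by (simp add: mult.commute)
    then show "q \<in> {a * b | a b. a \<in> S2 \<and> b \<in> S1}" by blast
  qed
  have "a * b \<in> P" using P1 a b by blast
  moreover have "a * b \<noteq> 0" using a b by simp
  ultimately have Hfg: "gen D P \<in> fgmod D" by (intro fgmod_I[OF Pf sr])
  have H1': "gen D S1 \<in> fgmod D" and H2': "gen D S2 \<in> fgmod D" using H1 H2 S1 S2 by auto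
  show ?thesis
    using SB_half[OF sr ss S1(1) S2(1) Pf H1' Hfg P1 P2] SB_half[OF sr ss S2(1) S1(1) Pf H2' Hfg P1' P2']
      S1(2) S2(2) Hfg by blast
qed

lemma SB_props:
  assumes sr: "subring D" and ss: "semistar D st"
  shows "overring D (star_bracket D st)"
    "\<And>G S y. G \<in> fgmod D \<Longrightarrow> G = gen D S \<Longrightarrow> finite S \<Longrightarrow> G \<subseteq> D \<Longrightarrow> st G = st D
       \<Longrightarrow> (\<forall>s\<in>S. y * s \<in> star_bracket D st) \<Longrightarrow> y \<in> star_bracket D st"
proof -
  define FF where "FF = {kcolon (st H) (st H) | H. H \<in> fgmod D}"
  have SB: "star_bracket D st = \<Union>FF" unfolding FF_def star_bracket_def by simp
  have Dfg: "D \<in> fgmod D" using fgmod_I[OF _ sr, of "{1}" 1] gen_one[OF sr] by simp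
  have ne: "FF \<noteq> {}" unfolding FF_def using Dfg by blast
  have dir: "\<forall>A\<in>FF. \<forall>B\<in>FF. \<exists>C\<in>FF. A \<subseteq> C \<and> B \<subseteq> C"
  proof (intro ballI)
    fix A B assume "A \<in> FF" "B \<in> FF"
    then obtain H1 H2 where H12: "A = kcolon (st H1) (st H1)" "H1 \<in> fgmod D"
      "B = kcolon (st H2) (st H2)" "H2 \<in> fgmod D" unfolding FF_def by blast
    obtain H where H: "H \<in> fgmod D" "kcolon (st H1) (st H1) \<subseteq> kcolon (st H) (st H)"
      "kcolon (st H2) (st H2) \<subseteq> kcolon (st H) (st H)" using SB_dir[OF sr ss H12(2,4)] by blast
    have "kcolon (st H) (st H) \<in> FF" unfolding FF_def using H(1) by blast
    then show "\<exists>C\<in>FF. A \<subseteq> C \<and> B \<subseteq> C" using H H12 by blast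
  qed
  have mem: "subring C \<and> D \<subseteq> C" if hC: "C \<in> FF" for C
  proof -
    obtain H where H: "C = kcolon (st H) (st H)" "H \<in> fgmod D" using hC unfolding FF_def by blast
    have "submod D (st H)" using ss_submod[OF ss sr] fgmod_Fbar[OF sr order.refl H(2)] by blast
    then show ?thesis using kc_ring[OF sr] H(1) by blast
  qed
  have "subring (star_bracket D st)" unfolding SB using dir_ring[OF ne dir] mem by blast
  moreover have "D \<subseteq> star_bracket D st"
  proof -
    have "kcolon (st D) (st D) \<in> FF" unfolding FF_def using Dfg by blast
    then show ?thesis using mem unfolding SB by blast
  qed
  ultimately show "overring D (star_bracket D st)" unfolding overring_def by blast
  fix G S y assume G: "G \<in> fgmod D" "G = gen D S" "finite S" "G \<subseteq> D" "st G = st D"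
    and y: "\<forall>s\<in>S. y * s \<in> star_bracket D st"
  obtain C where C: "C \<in> FF" "\<forall>s\<in>S. y * s \<in> C" using dir_fin[OF ne dir G(3)] y unfolding SB by blast
  obtain H where H: "C = kcolon (st H) (st H)" "H \<in> fgmod D" using C(1) unfolding FF_def by blast
  have "S \<subseteq> {z. y * z \<in> C}" using C(2) by blast
  then have "gen D S \<subseteq> {z. y * z \<in> C}"
    using mem[OF C(1)] by (intro gen_least submod_mulset ring_submod) auto
  then have "\<forall>g\<in>G. y * g \<in> kcolon (st H) (st H)" using G(2) H(1) by blast
  moreover have "G \<in> Fbar D" "H \<in> Fbar D" using fgmod_Fbar[OF sr order.refl] G(1) H(2) by auto
  ultimately have "y \<in> C" using core[OF ss sr _ G(4,5)] H(1) by blast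
  then show "y \<in> star_bracket D st" using C(1) unfolding SB by blast
qed

lemma frac_prod:
  assumes sr: "subring D" and ss: "semistar D st" and E1: "frac_ideal D E1" and E2: "frac_ideal D E2"
  shows "frac_ideal D (modprod E1 E2)"
proof -
  obtain d1 where d1: "d1 \<in> D" "d1 \<noteq> 0" "smul d1 E1 \<subseteq> D" using E1 unfolding frac_ideal_def by blast
  obtain d2 where d2: "d2 \<in> D" "d2 \<noteq> 0" "smul d2 E2 \<subseteq> D" using E2 unfolding frac_ideal_def by blast
  have F: "modprod E1 E2 \<in> Fbar D" using modprod_Fbar[OF ss sr] E1 E2 unfolding frac_ideal_def by blast
  have DD: "modprod D D \<subseteq> D" by (rule modprod_sub) (use subringD[OF sr] in auto)
  have "(d2 * d1) * p \<in> D" if p: "p \<in> modprod E1 E2" for p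
  proof -
    have "d1 * p \<in> modprod D E2" by (rule modprod_scal[OF _ p]) (use d1(3) in \<open>auto simp: smul_def\<close>)
    then have "d1 * p \<in> modprod E2 D" using modprod_comm by blast
    then have "d2 * (d1 * p) \<in> modprod D D" by (rule modprod_scal[rotated]) (use d2(3) in \<open>auto simp: smul_def\<close>)
    then have "d2 * (d1 * p) \<in> D" using DD by blast
    then show ?thesis by (simp add: mult.assoc)
  qed
  moreover have "d2 * d1 \<in> D" "d2 * d1 \<noteq> 0" using subringD(5)[OF sr d2(1) d1(1)] d1 d2 by auto
  ultimately show ?thesis using F unfolding frac_ideal_def smul_def by blast
qed

lemma kc_prod: "x \<in> kcolon E1 E1 \<Longrightarrow> x \<in> kcolon (modprod E1 E2) (modprod E1 E2)"
  unfolding kcolon_def using modprod_scal[of E1 x E1] by blast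

lemma CIC_props:
  assumes sr: "subring D" and ss: "semistar D st"
  shows "overring D (cic D)"
    "kcolon D (st D) \<noteq> {0} \<Longrightarrow> G \<in> fgmod D \<Longrightarrow> G = gen D S \<Longrightarrow> finite S \<Longrightarrow> G \<subseteq> D \<Longrightarrow> st G = st D
       \<Longrightarrow> (\<forall>s\<in>S. y * s \<in> cic D) \<Longrightarrow> y \<in> cic D"
proof -
  define FF where "FF = {kcolon E E | E. frac_ideal D E}"
  have CI: "cic D = \<Union>FF" unfolding FF_def cic_def by simp
  have Dfr: "frac_ideal D D" unfolding frac_ideal_def
  proof (intro conjI bexI[of _ 1])
    show "D \<in> Fbar D" by (rule D_Fbar[OF ss sr])
    show "(1::'a) \<noteq> 0" by simp
    show "1 \<in> D" by (rule subringD(2)[OF sr])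
    show "smul 1 D \<subseteq> D" unfolding smul_def by simp
  qed
  have ne: "FF \<noteq> {}" unfolding FF_def using Dfr by blast
  have dir: "\<forall>A\<in>FF. \<forall>B\<in>FF. \<exists>C\<in>FF. A \<subseteq> C \<and> B \<subseteq> C"
  proof (intro ballI)
    fix A B assume "A \<in> FF" "B \<in> FF"
    then obtain E1 E2 where E12: "A = kcolon E1 E1" "frac_ideal D E1"
      "B = kcolon E2 E2" "frac_ideal D E2" unfolding FF_def by blast
    have "kcolon (modprod E1 E2) (modprod E1 E2) \<in> FF" unfolding FF_def using frac_prod[OF sr ss E12(2,4)] by blast
    moreover have "A \<subseteq> kcolon (modprod E1 E2) (modprod E1 E2)" using kc_prod E12(1) by blast
    moreover have "B \<subseteq> kcolon (modprod E1 E2) (modprod E1 E2)"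
    proof -
      have "B \<subseteq> kcolon (modprod E2 E1) (modprod E2 E1)" using kc_prod E12(3) by blast
      then show ?thesis using modprod_comm[of E2 E1] by simp
    qed
    ultimately show "\<exists>C\<in>FF. A \<subseteq> C \<and> B \<subseteq> C" by blast
  qed
  have mem: "subring C \<and> D \<subseteq> C" if hC: "C \<in> FF" for C
  proof -
    obtain E where E: "C = kcolon E E" "frac_ideal D E" using hC unfolding FF_def by blast
    have "submod D E" using E(2) unfolding frac_ideal_def Fbar_iff by blast
    then show ?thesis using kc_ring[OF sr] E(1) by blast
  qed
  have "subring (cic D)" unfolding CI using dir_ring[OF ne dir] mem by blast
  moreover have "D \<subseteq> cic D"
  proof -
    have "kcolon D D \<in> FF" unfolding FF_def using Dfr by blast
    then show ?thesis using mem unfolding CI by blast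
  qed
  ultimately show "overring D (cic D)" unfolding overring_def by blast
  assume cnz: "kcolon D (st D) \<noteq> {0}" and G: "G \<in> fgmod D" "G = gen D S" "finite S" "G \<subseteq> D" "st G = st D"
    and y: "\<forall>s\<in>S. y * s \<in> cic D"
  have "0 \<in> kcolon D (st D)" unfolding kcolon_def using subringD(1)[OF sr] by simp
  then have "\<exists>c. c \<in> kcolon D (st D) \<and> c \<noteq> 0" using cnz by blast
  then obtain c where c: "c \<in> kcolon D (st D)" "c \<noteq> 0" by blast
  have "c * 1 \<in> D" using c(1) one_st[OF ss sr] unfolding kcolon_def by blast
  then have cD: "c \<in> D" by simp
  obtain C where C: "C \<in> FF" "\<forall>s\<in>S. y * s \<in> C" using dir_fin[OF ne dir G(3)] y unfolding CI by blast
  obtain E where E: "C = kcolon E E" "frac_ideal D E" using C(1) unfolding FF_def by blast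
  have EF: "E \<in> Fbar D" using E(2) unfolding frac_ideal_def by blast
  have "S \<subseteq> {z. y * z \<in> C}" using C(2) by blast
  then have "gen D S \<subseteq> {z. y * z \<in> C}"
    using mem[OF C(1)] by (intro gen_least submod_mulset ring_submod) auto
  then have "\<forall>g\<in>G. y * g \<in> kcolon (st E) (st E)" using G(2) E(1) kc_star[OF ss sr EF] by blast
  moreover have "G \<in> Fbar D" using fgmod_Fbar[OF sr order.refl] G(1) by auto
  ultimately have yE: "y \<in> kcolon (st E) (st E)" using core[OF ss sr _ G(4,5) EF] by blast
  have "frac_ideal D (st E)"
  proof -
    obtain d where d: "d \<in> D" "d \<noteq> 0" "smul d E \<subseteq> D" using E(2) unfolding frac_ideal_def by blast
    have "st (smul d E) \<subseteq> st D" by (rule ss_mono[OF ss sr smul_Fbar[OF ss sr EF d(2)] D_Fbar[OF ss sr] d(3)])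
    then have sd: "smul d (st E) \<subseteq> st D" using ss_smul[OF ss sr d(2) EF] by simp
    have "(c * d) * z \<in> D" if z: "z \<in> st E" for z
    proof -
      have "d * z \<in> st D" using sd z unfolding smul_def by blast
      then have "c * (d * z) \<in> D" using c(1) unfolding kcolon_def by blast
      then show ?thesis by (simp add: mult.assoc)
    qed
    moreover have "c * d \<in> D" "c * d \<noteq> 0" using subringD(5)[OF sr cD d(1)] c d by auto
    ultimately show ?thesis using ss_Fbar[OF ss sr EF] unfolding frac_ideal_def smul_def by blast
  qed
  then have "kcolon (st E) (st E) \<in> FF" unfolding FF_def by blast
  then show "y \<in> cic D" using yE unfolding CI by blast
qed

theorem corollary5p5:
  fixes D :: "'a::field set" and star :: "'a set \<Rightarrow> 'a set"
  assumes "subring D" and "quotient_field_of D"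
    and "semistar D star"
    and "PMD D star"
  shows "(\<forall>T. overring D T \<longrightarrow> PMD T star)
    \<and> (\<forall>T. overring D T \<and> t_linked D star T \<longrightarrow> PvMD T)
    \<and> PvMD (star_bracket D star)
    \<and> (kcolon D (star D) \<noteq> {0} \<longrightarrow> PvMD (cic D))"
proof (intro conjI allI impI)
  note sr = assms(1) and ss = assms(3) and pm = assms(4)
  show "PMD T star" if "overring D T" for T using partA[OF sr ss pm that] .
  show "PvMD T" if "overring D T \<and> t_linked D star T" for T using partB[OF sr ss pm] that by blast
  have SBo: "overring D (star_bracket D star)" by (rule SB_props(1)[OF sr ss])
  have "t_linked D star (star_bracket D star)"
    using SBo unfolding overring_def
    by (intro TL[OF sr]) (auto intro: SB_props(2)[OF sr ss])
  then show "PvMD (star_bracket D star)" using partB[OF sr ss pm SBo] by blast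
  assume cnz: "kcolon D (star D) \<noteq> {0}"
  have Co: "overring D (cic D)" by (rule CIC_props(1)[OF sr ss])
  have "t_linked D star (cic D)"
    using Co unfolding overring_def
    by (intro TL[OF sr]) (auto intro: CIC_props(2)[OF sr ss cnz])
  then show "PvMD (cic D)" using partB[OF sr ss pm Co] by blast
qed


end
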